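(* Let $H$ be a finite abelian group with exponent $e$, and let $S_1\subseteq H$ satisfy $0\notin S_1$ and $\ell S_1=S_1$ for all $\ell\in\mathbb{Z}_e^*$. Let $G=\mathbb{Z}_2\times H$ and $$S=(\{1\}\times S_1)\cup(\{0\}\times S_1)\cup\{(1,0)\}.$$ Let $p$ be a prime dividing $d=|S_1|$, let $f$ be the characteristic function of $S_1$, and suppose $f$ is $p^r$-plateaued over $H$ with $r\ge1$. Put $r_0=\min(r,v_p(d))$ (so $r_0\geq1$). Then for every $(x,y)\in G$, the Cayley graph $\mathrm{Cay}(G,S)$ has fractional revival between $(x+1,y)$ and $(x,y)$ at time $t=\pi/p^{r_0}$; specifically $e^{\imath t\lambda_g}=e^{\imath\pi/p^{r_0}}$ for $g\in\{0\}\times H$ and $e^{\imath t\lambda_g}=e^{-\imath\pi/p^{r_0}}$ for $g\in\{1\}\times H$, giving $(\cos(\pi/p^{r_0}),\ \imath\sin(\pi/p^{r_0}))$-fractional revival.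
   Context: $\mathbb{Z}_e^*=\{\ell:1\le\ell\le e-1,\gcd(\ell,e)=1\}$ and $\ell S_1=\{\ell s:s\in S_1\}$. $v_p(d)$ is the exponent of the highest power of $p$ dividing $d$. A class function over $H$ is $f:H\to\mathbb{Z}$ with $f(\ell x)=f(x)$ for all $x\in H$, $\ell\in\mathbb{Z}_e^*$. The Fourier transform is $\widehat{f}(\chi)=\sum_{x\in H}f(x)\overline{\chi(x)}$. A class function $f$ is $p^r$-plateaued over $H$ if there is an integer $k$ with $\widehat{f}(\chi)\equiv k\pmod{p^r}$ for every character $\chi$ of $H$, $r$ being the largest such exponent. $\mathrm{Cay}(G,S)$ has vertex set $G$, $u\sim v$ iff $u-v\in S$; $A$ its adjacency matrix, $H(t)=\exp(\imath tA)$; eigenvalues $\lambda_g=\sum_{s\in S}\chi_g(s)$. Fractional revival from $u$ to $v$ at time $t$ means $H(t)\mathbf{e}_u=\alpha\mathbf{e}_u+\beta\mathbf{e}_v$ for some $\alpha,\beta\in\mathbb{C}$ with $\beta\neq0$, $|\alpha|^2+|\beta|^2=1$. *)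

theory Defs
  imports Complex_Main "HOL-Library.Numeral_Type" "HOL-Library.Product_Plus"
    "HOL-Computational_Algebra.Primes"
begin

definition nsmul :: "nat \<Rightarrow> 'a::ab_group_add \<Rightarrow> 'a" where
  "nsmul n x = (((+) x) ^^ n) 0"

definition group_exponent :: "'a::{finite,ab_group_add} itself \<Rightarrow> nat" where
  "group_exponent _ = (LEAST n. n > 0 \<and> (\<forall>x::'a. nsmul n x = 0))"

definition units_mod :: "nat \<Rightarrow> nat set" where
  "units_mod e = {l. 1 \<le> l \<and> l \<le> e - 1 \<and> coprime l e}"

definition is_character :: "('a::ab_group_add \<Rightarrow> complex) \<Rightarrow> bool" where
  "is_character \<chi> \<longleftrightarrow> \<chi> 0 = 1 \<and> (\<forall>x y. \<chi> (x + y) = \<chi> x * \<chi> y)"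

definition class_function :: "('a::{finite,ab_group_add} \<Rightarrow> int) \<Rightarrow> bool" where
  "class_function f \<longleftrightarrow>
     (\<forall>x l. l \<in> units_mod (group_exponent TYPE('a)) \<longrightarrow> f (nsmul l x) = f x)"

definition fourier :: "('a::{finite,ab_group_add} \<Rightarrow> int) \<Rightarrow> ('a \<Rightarrow> complex) \<Rightarrow> complex" where
  "fourier f \<chi> = (\<Sum>x\<in>UNIV. of_int (f x) * cnj (\<chi> x))"

definition fourier_cong_const :: "('a::{finite,ab_group_add} \<Rightarrow> int) \<Rightarrow> nat \<Rightarrow> bool" where
  "fourier_cong_const f m \<longleftrightarrow>
     (\<exists>k::int. \<forall>\<chi>::'a \<Rightarrow> complex. is_character \<chi> \<longrightarrow>
        (\<exists>j::int. fourier f \<chi> = of_int k + of_nat m * of_int j))"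

definition plateaued :: "('a::{finite,ab_group_add} \<Rightarrow> int) \<Rightarrow> nat \<Rightarrow> nat \<Rightarrow> bool" where
  "plateaued f p r \<longleftrightarrow> class_function f \<and> fourier_cong_const f (p ^ r)
      \<and> \<not> fourier_cong_const f (p ^ Suc r)"

definition indicator_int :: "'a set \<Rightarrow> 'a \<Rightarrow> int" where
  "indicator_int A x = (if x \<in> A then 1 else 0)"

definition cay_adj :: "'a::ab_group_add set \<Rightarrow> 'a \<Rightarrow> 'a \<Rightarrow> complex" where
  "cay_adj S u v = (if u - v \<in> S then 1 else 0)"

fun mat_pow :: "('a::finite \<Rightarrow> 'a \<Rightarrow> complex) \<Rightarrow> nat \<Rightarrow> 'a \<Rightarrow> 'a \<Rightarrow> complex" where
  "mat_pow A 0 = (\<lambda>u v. if u = v then 1 else 0)"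
| "mat_pow A (Suc k) = (\<lambda>u v. \<Sum>w\<in>UNIV. A u w * mat_pow A k w v)"

definition transition :: "('a::finite \<Rightarrow> 'a \<Rightarrow> complex) \<Rightarrow> real \<Rightarrow> 'a \<Rightarrow> 'a \<Rightarrow> complex" where
  "transition A t u v = (\<Sum>k. (\<i> * of_real t) ^ k / of_nat (fact k) * mat_pow A k u v)"

definition frac_revival_with ::
  "('a::finite \<Rightarrow> 'a \<Rightarrow> complex) \<Rightarrow> 'a \<Rightarrow> 'a \<Rightarrow> real \<Rightarrow> complex \<Rightarrow> complex \<Rightarrow> bool" where
  "frac_revival_with A u v t \<alpha> \<beta> \<longleftrightarrow> \<beta> \<noteq> 0 \<and> (cmod \<alpha>)\<^sup>2 + (cmod \<beta>)\<^sup>2 = 1 \<and>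
     (\<forall>w. transition A t w u = \<alpha> * (if w = u then 1 else 0) + \<beta> * (if w = v then 1 else 0))"

definition frac_revival :: "('a::finite \<Rightarrow> 'a \<Rightarrow> complex) \<Rightarrow> 'a \<Rightarrow> 'a \<Rightarrow> real \<Rightarrow> bool" where
  "frac_revival A u v t \<longleftrightarrow> (\<exists>\<alpha> \<beta>. frac_revival_with A u v t \<alpha> \<beta>)"

definition cay_eigenvalue :: "'a set \<Rightarrow> ('a \<Rightarrow> complex) \<Rightarrow> complex" where
  "cay_eigenvalue S \<chi> = (\<Sum>s\<in>S. \<chi> s)"

end

theory Submission
  imports Defs "HOL-Library.FuncSet"
begin

lemma nsmul_0[simp]: "nsmul 0 x = 0" by (simp add: nsmul_def)
lemma nsmul_Suc[simp]: "nsmul (Suc n) x = x + nsmul n x" by (simp add: nsmul_def)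
lemma nsmul_add: "nsmul (m + n) x = nsmul m x + nsmul n x"
  by (induction m) (auto simp: add.assoc)
lemma nsmul_mult: "nsmul (m * n) x = nsmul m (nsmul n x)"
  by (induction m) (auto simp: nsmul_add)
lemma nsmul_zero[simp]: "nsmul n (0::'a::ab_group_add) = 0"
  by (induction n) auto

lemma finite_order:
  fixes x :: "'a::{finite,ab_group_add}"
  shows "\<exists>m>0. nsmul m x = 0"
proof -
  have "\<not> inj (\<lambda>n::nat. nsmul n x)"
  proof
    assume "inj (\<lambda>n::nat. nsmul n x)"
    then have "finite (UNIV::nat set)"
      by (metis finite_imageD finite_subset subset_UNIV finite)
    then show False by simp
  qed
  then obtain a b where ab: "a \<noteq> b" "nsmul a x = nsmul b x"
    unfolding inj_def by auto
  show ?thesis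
  proof (cases "a < b")
    case True
    have "nsmul b x = nsmul (b - a) x + nsmul a x"
      using True by (metis nsmul_add le_add_diff_inverse2 less_imp_le)
    then show ?thesis using ab True by (intro exI[of _ "b - a"]) auto
  next
    case False
    then have "b < a" using ab by auto
    have "nsmul a x = nsmul (a - b) x + nsmul b x"
      using \<open>b < a\<close> by (metis nsmul_add le_add_diff_inverse2 less_imp_le)
    then show ?thesis using ab \<open>b < a\<close> by (intro exI[of _ "a - b"]) auto
  qed
qed

definition subgrp :: "'a::ab_group_add set \<Rightarrow> bool" where
  "subgrp K \<longleftrightarrow> 0 \<in> K \<and> (\<forall>x\<in>K. \<forall>y\<in>K. x + y \<in> K)"

definition char_on :: "'a::ab_group_add set \<Rightarrow> ('a \<Rightarrow> complex) \<Rightarrow> bool" where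
  "char_on K \<chi> \<longleftrightarrow> \<chi> 0 = 1 \<and> (\<forall>x\<in>K. \<forall>y\<in>K. \<chi> (x + y) = \<chi> x * \<chi> y)"

lemma subgrp_nsmul: "subgrp K \<Longrightarrow> x \<in> K \<Longrightarrow> nsmul n x \<in> K"
  by (induction n) (auto simp: subgrp_def)

lemma subgrp_uminus:
  fixes K :: "'a::{finite,ab_group_add} set"
  assumes "subgrp K" "x \<in> K" shows "- x \<in> K"
proof -
  obtain m where m: "m > 0" "nsmul m x = 0" using finite_order by blast
  then obtain m' where "m = Suc m'" by (cases m) auto
  then have "- x = nsmul m' x" using m by (simp add: minus_unique)
  then show ?thesis using subgrp_nsmul assms by metis
qed

lemma subgrp_diff:
  fixes K :: "'a::{finite,ab_group_add} set"
  assumes "subgrp K" "x \<in> K" "y \<in> K" shows "x - y \<in> K"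
  using subgrp_uminus[OF assms(1,3)] assms unfolding subgrp_def
  by (metis diff_conv_add_uminus)

lemma char_on_nsmul: "char_on K \<chi> \<Longrightarrow> subgrp K \<Longrightarrow> x \<in> K \<Longrightarrow> \<chi> (nsmul n x) = \<chi> x ^ n"
proof (induction n)
  case 0 then show ?case by (simp add: char_on_def)
next
  case (Suc n)
  then show ?case using subgrp_nsmul[of K x n] by (simp add: char_on_def)
qed

lemma char_ext_welldef:
  fixes K :: "'a::{finite,ab_group_add} set"
  assumes K: "subgrp K" and chi: "char_on K \<chi>"
    and m: "m > 0" "nsmul m g \<in> K" "\<forall>b. 0 < b \<and> b < m \<longrightarrow> nsmul b g \<notin> K"
    and w: "w ^ m = \<chi> (nsmul m g)"
    and kk: "k \<in> K" "k' \<in> K" and eq: "k + nsmul j g = k' + nsmul j' g" and le: "j' \<le> j"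
  shows "\<chi> k * w ^ j = \<chi> k' * w ^ j'"
proof -
  define d where "d = j - j'"
  have jd: "j = d + j'" using le d_def by simp
  have k': "k' = k + nsmul d g" using eq unfolding jd nsmul_add
    by (metis add.assoc add_right_cancel)
  have dK: "nsmul d g \<in> K" using subgrp_diff[OF K kk(2) kk(1)] k' by (simp add: algebra_simps)
  define a where "a = d div m"
  define b where "b = d mod m"
  have db: "d = b + a * m" using a_def b_def by simp
  have amK: "nsmul (a * m) g \<in> K" using subgrp_nsmul[OF K m(2)] by (simp add: nsmul_mult)
  have "nsmul b g = nsmul d g - nsmul (a * m) g" unfolding db nsmul_add by simp
  then have "nsmul b g \<in> K" using subgrp_diff[OF K dK amK] by simp
  moreover have "b < m" using m(1) b_def by simp
  ultimately have "b = 0" using m(3) by auto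
  then have dam: "d = a * m" using db by simp
  have "\<chi> (nsmul d g) = w ^ d"
    unfolding dam nsmul_mult using char_on_nsmul[OF chi K m(2)] w
    by (metis power_mult power_mult_distrib mult.commute)
  then have "\<chi> k' = \<chi> k * w ^ d" using k' chi kk dK unfolding char_on_def by auto
  then show ?thesis unfolding jd by (simp add: power_add)
qed

lemma char_ext_welldef':
  fixes K :: "'a::{finite,ab_group_add} set"
  assumes K: "subgrp K" and chi: "char_on K \<chi>"
    and m: "m > 0" "nsmul m g \<in> K" "\<forall>b. 0 < b \<and> b < m \<longrightarrow> nsmul b g \<notin> K"
    and w: "w ^ m = \<chi> (nsmul m g)"
    and kk: "k \<in> K" "k' \<in> K" and eq: "k + nsmul j g = k' + nsmul j' g"
  shows "\<chi> k * w ^ j = \<chi> k' * w ^ j'"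
proof (cases "j' \<le> j")
  case True then show ?thesis using char_ext_welldef[OF assms] by blast
next
  case False
  then show ?thesis using char_ext_welldef[OF K chi m w kk(2) kk(1) eq[symmetric]] by simp
qed

lemma char_extend:
  fixes K :: "'a::{finite,ab_group_add} set"
  assumes K: "subgrp K" and chi: "char_on K \<chi>"
    and m: "m > 0" "nsmul m g \<in> K" "\<forall>b. 0 < b \<and> b < m \<longrightarrow> nsmul b g \<notin> K"
    and w: "w ^ m = \<chi> (nsmul m g)"
  defines "K' \<equiv> {k + nsmul j g | k j. k \<in> K}"
  shows "\<exists>\<chi>'. char_on K' \<chi>' \<and> (\<forall>x\<in>K. \<chi>' x = \<chi> x) \<and> \<chi>' g = w"
proof -
  define \<chi>' where "\<chi>' x = (SOME v. \<exists>k j. k \<in> K \<and> x = k + nsmul j g \<and> v = \<chi> k * w ^ j)" for x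
  have val: "\<chi>' (k + nsmul j g) = \<chi> k * w ^ j" if "k \<in> K" for k j
  proof -
    have "\<exists>k' j'. k' \<in> K \<and> k + nsmul j g = k' + nsmul j' g \<and> \<chi>' (k + nsmul j g) = \<chi> k' * w ^ j'"
      unfolding \<chi>'_def by (rule someI_ex) (use that in blast)
    then obtain k' j' where "k' \<in> K" "k + nsmul j g = k' + nsmul j' g"
      "\<chi>' (k + nsmul j g) = \<chi> k' * w ^ j'" by blast
    then show ?thesis using char_ext_welldef'[OF K chi m w that] by metis
  qed
  have "char_on K' \<chi>'"
    unfolding char_on_def
  proof (intro conjI ballI)
    show "\<chi>' 0 = 1" using val[of 0 0] K chi by (simp add: subgrp_def char_on_def)
    fix x y assume "x \<in> K'" "y \<in> K'"
    then obtain k j k' j' where xy: "k \<in> K" "k' \<in> K" "x = k + nsmul j g" "y = k' + nsmul j' g"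
      unfolding K'_def by blast
    have "x + y = (k + k') + nsmul (j + j') g" unfolding xy nsmul_add by (simp add: algebra_simps)
    moreover have "k + k' \<in> K" using K xy by (simp add: subgrp_def)
    ultimately have "\<chi>' (x + y) = \<chi> (k + k') * w ^ (j + j')" using val by simp
    also have "\<dots> = \<chi>' x * \<chi>' y" using val xy chi by (simp add: char_on_def power_add)
    finally show "\<chi>' (x + y) = \<chi>' x * \<chi>' y" .
  qed
  moreover have "\<forall>x\<in>K. \<chi>' x = \<chi> x" using val[of _ 0] by simp
  moreover have "\<chi>' g = w" using val[of 0 1] K chi by (simp add: subgrp_def char_on_def)
  ultimately show ?thesis by blast
qed

lemma complex_root_exists:
  assumes "m > 0" shows "\<exists>w::complex. w ^ m = c"
proof -
  have "(rcis (root m (cmod c)) (Arg c / m)) ^ m = rcis (cmod c) (Arg c)"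
    using assms by (simp add: DeMoivre2 real_root_pow_pos2)
  then show ?thesis using rcis_cmod_Arg by metis
qed

lemma char_extend_all:
  fixes K :: "'a::{finite,ab_group_add} set"
  assumes "subgrp K" "char_on K \<chi>"
  shows "\<exists>\<chi>'. is_character \<chi>' \<and> (\<forall>x\<in>K. \<chi>' x = \<chi> x)"
  using assms
proof (induction "card (- K)" arbitrary: K \<chi> rule: less_induct)
  case less
  show ?case
  proof (cases "K = UNIV")
    case True
    then show ?thesis using less.prems by (auto simp: is_character_def char_on_def)
  next
    case False
    then obtain g where g: "g \<notin> K" by blast
    define P where "P m = (m > 0 \<and> nsmul m g \<in> K)" for m
    obtain M where "M > 0" "nsmul M g = 0" using finite_order by blast
    then have PM: "P M" using less.prems(1) by (simp add: P_def subgrp_def)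
    define m where "m = (LEAST m. P m)"
    have Pm: "P m" unfolding m_def by (rule LeastI[of P, OF PM])
    have mmin: "\<forall>b. 0 < b \<and> b < m \<longrightarrow> nsmul b g \<notin> K"
      using not_less_Least[of _ P] unfolding m_def P_def by blast
    obtain w where w: "w ^ m = \<chi> (nsmul m g)" using complex_root_exists Pm P_def by blast
    define K' where "K' = {k + nsmul j g | k j. k \<in> K}"
    obtain \<chi>' where \<chi>': "char_on K' \<chi>'" "\<forall>x\<in>K. \<chi>' x = \<chi> x"
      using char_extend[OF less.prems _ _ mmin w] Pm unfolding P_def K'_def by blast
    have subK': "subgrp K'" unfolding subgrp_def K'_def
    proof (intro conjI ballI)
      show "0 \<in> {k + nsmul j g |k j. k \<in> K}" using less.prems(1)
        by (auto simp: subgrp_def intro!: exI[of _ 0])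
      fix x y assume "x \<in> {k + nsmul j g |k j. k \<in> K}" "y \<in> {k + nsmul j g |k j. k \<in> K}"
      then obtain k j k' j' where xy: "k \<in> K" "k' \<in> K" "x = k + nsmul j g" "y = k' + nsmul j' g"
        by blast
      have "x + y = (k + k') + nsmul (j + j') g" unfolding xy nsmul_add by (simp add: algebra_simps)
      moreover have "k + k' \<in> K" using less.prems(1) xy by (simp add: subgrp_def)
      ultimately show "x + y \<in> {k + nsmul j g |k j. k \<in> K}" by blast
    qed
    have KK': "K \<subseteq> K'" unfolding K'_def by (force intro: exI[of _ 0])
    have gK': "g \<in> K'" unfolding K'_def using less.prems(1)
      by (auto simp: subgrp_def intro!: exI[of _ 0] exI[of _ 1])
    have "- K' \<subset> - K" using KK' gK' g by blast
    then have "card (- K') < card (- K)" by (simp add: psubset_card_mono)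
    from less.hyps[OF this subK' \<chi>'(1)] obtain \<chi>'' where
      c1: "is_character \<chi>''" and c2: "\<forall>x\<in>K'. \<chi>'' x = \<chi>' x" by blast
    have "\<forall>x\<in>K. \<chi>'' x = \<chi> x"
    proof
      fix x assume "x \<in> K"
      then show "\<chi>'' x = \<chi> x" using c2 \<chi>'(2) KK' by auto
    qed
    with c1 show ?thesis by blast
  qed
qed

lemma separating_char:
  fixes h :: "'a::{finite,ab_group_add}"
  assumes "h \<noteq> 0"
  shows "\<exists>\<chi>. is_character \<chi> \<and> \<chi> h \<noteq> 1"
proof -
  define K :: "'a set" where "K = {0}"
  have K: "subgrp K" by (simp add: K_def subgrp_def)
  have chi: "char_on K (\<lambda>_. 1)" by (simp add: char_on_def)
  define P where "P m = (m > 0 \<and> nsmul m h \<in> K)" for m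
  obtain M where "M > 0" "nsmul M h = 0" using finite_order by blast
  then have PM: "P M" by (simp add: P_def K_def)
  define m where "m = (LEAST m. P m)"
  have Pm: "P m" unfolding m_def by (rule LeastI[of P, OF PM])
  have mmin: "\<forall>b. 0 < b \<and> b < m \<longrightarrow> nsmul b h \<notin> K"
    using not_less_Least[of _ P] unfolding m_def P_def by blast
  have m2: "m \<ge> 2"
  proof (rule ccontr)
    assume "\<not> m \<ge> 2"
    then have "m = 1" using Pm P_def by auto
    then show False using Pm assms by (simp add: P_def K_def)
  qed
  define w where "w = cis (2 * pi / m)"
  have w: "w ^ m = 1" unfolding w_def DeMoivre using m2 by simp
  have w1: "w \<noteq> 1"
  proof
    assume "w = 1"
    then have "cos (2 * pi / m) = 1" unfolding w_def by (metis cis.sel(1) one_complex.sel(1))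
    then obtain n :: int where n: "2 * pi / m = real_of_int n * 2 * pi" using cos_one_2pi_int by blast
    have "1 / real m = (2 * pi / m) / (2 * pi)" by simp
    also have "\<dots> = real_of_int n" using n by simp
    finally have "1 / m = real_of_int n" .
    moreover have "0 < 1 / real m" "1 / real m < 1" using m2 by auto
    ultimately have "0 < real_of_int n" "real_of_int n < 1" by auto
    then have "0 < n" "n < 1" by simp_all
    then show False by simp
  qed
  define K' where "K' = {k + nsmul j h | k j. k \<in> K}"
  have "\<exists>\<chi>'. char_on K' \<chi>' \<and> (\<forall>x\<in>K. \<chi>' x = 1) \<and> \<chi>' h = w"
    unfolding K'_def
  proof (rule char_extend[OF K chi _ _ mmin])
    show "0 < m" "nsmul m h \<in> K" using Pm by (simp_all add: P_def)
    show "w ^ m = 1" by (rule w)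
  qed
  then obtain \<chi>' where \<chi>': "char_on K' \<chi>'" "\<chi>' h = w" by blast
  have subK': "subgrp K'" unfolding subgrp_def K'_def
  proof (intro conjI ballI)
    show "0 \<in> {k + nsmul j h |k j. k \<in> K}" using K
      by (auto simp: subgrp_def intro!: exI[of _ 0])
    fix x y assume "x \<in> {k + nsmul j h |k j. k \<in> K}" "y \<in> {k + nsmul j h |k j. k \<in> K}"
    then obtain k j k' j' where xy: "k \<in> K" "k' \<in> K" "x = k + nsmul j h" "y = k' + nsmul j' h"
      by blast
    have "x + y = (k + k') + nsmul (j + j') h" unfolding xy nsmul_add by (simp add: algebra_simps)
    moreover have "k + k' \<in> K" using K xy by (simp add: subgrp_def)
    ultimately show "x + y \<in> {k + nsmul j h |k j. k \<in> K}" by blast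
  qed
  obtain \<chi> where c1: "is_character \<chi>" and c2: "\<forall>x\<in>K'. \<chi> x = \<chi>' x"
    using char_extend_all[OF subK' \<chi>'(1)] by blast
  have "h = 0 + nsmul 1 h" by simp
  then have "h \<in> K'" unfolding K'_def K_def by blast
  then have "\<chi> h = w" using c2 \<chi>'(2) by simp
  then show ?thesis using c1 w1 by blast
qed


lemma is_char_on: "is_character \<chi> \<longleftrightarrow> char_on UNIV \<chi>"
  by (simp add: is_character_def char_on_def)

lemma char_nsmul:
  fixes \<chi> :: "'a::{finite,ab_group_add} \<Rightarrow> complex"
  shows "is_character \<chi> \<Longrightarrow> \<chi> (nsmul n x) = \<chi> x ^ n"
  using char_on_nsmul[of UNIV \<chi> x n] by (simp add: is_char_on subgrp_def)

lemma char_inv: "is_character \<chi> \<Longrightarrow> \<chi> x * \<chi> (- x) = 1"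
  unfolding is_character_def by (metis add.right_inverse)

lemma char_nz: "is_character \<chi> \<Longrightarrow> \<chi> x \<noteq> 0"
  using char_inv[of \<chi> x] by auto

lemma finite_chars: "finite {\<chi> :: 'a::{finite,ab_group_add} \<Rightarrow> complex. is_character \<chi>}"
proof -
  define m where "m x = (SOME m. m > 0 \<and> nsmul m x = (0::'a))" for x
  have m: "m x > 0 \<and> nsmul (m x) x = 0" for x
    unfolding m_def by (rule someI_ex) (rule finite_order)
  have "{\<chi> :: 'a \<Rightarrow> complex. is_character \<chi>} \<subseteq> PiE UNIV (\<lambda>x. {z. z ^ (m x) = 1})"
  proof
    fix \<chi> :: "'a \<Rightarrow> complex" assume "\<chi> \<in> {\<chi>. is_character \<chi>}"
    then have c: "is_character \<chi>" by simp
    have "\<chi> x ^ m x = 1" for x using char_nsmul[OF c, of "m x" x] m[of x] c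
      by (simp add: is_character_def)
    then show "\<chi> \<in> PiE UNIV (\<lambda>x. {z. z ^ (m x) = 1})" by (simp add: PiE_UNIV_domain)
  qed
  moreover have "finite (PiE UNIV (\<lambda>x. {z::complex. z ^ (m x) = 1}))"
    by (rule finite_PiE) (use m in \<open>auto intro!: finite_roots_unity simp: Suc_leI\<close>)
  ultimately show ?thesis by (rule finite_subset)
qed

abbreviation chars :: "('a::{finite,ab_group_add} \<Rightarrow> complex) set" where
  "chars \<equiv> {\<chi>. is_character \<chi>}"

lemma triv_char: "is_character (\<lambda>_. 1)" by (simp add: is_character_def)

lemma card_chars_pos: "card (chars :: ('a::{finite,ab_group_add} \<Rightarrow> complex) set) > 0"
  using finite_chars triv_char card_gt_0_iff by blast

lemma sum_chars:
  fixes h :: "'a::{finite,ab_group_add}"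
  shows "(\<Sum>\<chi>\<in>chars. \<chi> h) = (if h = 0 then of_nat (card (chars :: ('a \<Rightarrow> complex) set)) else 0)"
proof (cases "h = 0")
  case True
  have "(\<Sum>\<chi>\<in>chars. \<chi> h) = (\<Sum>\<chi>\<in>(chars :: ('a \<Rightarrow> complex) set). 1)"
    using True by (intro sum.cong) (auto simp: is_character_def)
  then show ?thesis using True by simp
next
  case False
  obtain \<chi>0 where c0: "is_character \<chi>0" "\<chi>0 h \<noteq> 1" using separating_char[OF False] by blast
  define F where "F \<chi> = (\<lambda>x. \<chi>0 x * \<chi> x)" for \<chi> :: "'a \<Rightarrow> complex"
  have Fc: "is_character (F \<chi>)" if "is_character \<chi>" for \<chi>
    using c0(1) that unfolding F_def is_character_def by (simp add: algebra_simps)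
  have inj: "inj_on F chars"
  proof
    fix a b assume "a \<in> chars" "b \<in> chars" "F a = F b"
    then have "\<chi>0 x * a x = \<chi>0 x * b x" for x unfolding F_def by metis
    then show "a = b" using char_nz[OF c0(1)] by auto
  qed
  have img: "F ` chars = chars"
  proof
    show "F ` chars \<subseteq> chars" using Fc by auto
    show "chars \<subseteq> F ` chars"
    proof
      fix \<chi> :: "'a \<Rightarrow> complex" assume "\<chi> \<in> chars"
      then have c: "is_character \<chi>" by simp
      define \<psi> where "\<psi> x = \<chi> x * \<chi>0 (- x)" for x
      have "\<chi>0 (- (x + y)) = \<chi>0 (- x) * \<chi>0 (- y)" for x y
        using c0(1) unfolding is_character_def by (metis minus_add_distrib)
      then have "is_character \<psi>" using c c0(1) unfolding \<psi>_def is_character_def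
        by (simp add: algebra_simps)
      moreover have "F \<psi> = \<chi>" unfolding F_def \<psi>_def
        using char_inv[OF c0(1)] by (auto simp: fun_eq_iff algebra_simps)
      ultimately show "\<chi> \<in> F ` chars" by blast
    qed
  qed
  have "(\<Sum>\<chi>\<in>chars. \<chi> h) = (\<Sum>\<chi>\<in>F ` chars. \<chi> h)" using img by simp
  also have "\<dots> = (\<Sum>\<chi>\<in>chars. \<chi>0 h * \<chi> h)" using sum.reindex[OF inj, of "\<lambda>\<chi>. \<chi> h"] by (simp add: F_def)
  also have "\<dots> = \<chi>0 h * (\<Sum>\<chi>\<in>chars. \<chi> h)" by (simp add: sum_distrib_left)
  finally have "(1 - \<chi>0 h) * (\<Sum>\<chi>\<in>chars. \<chi> h) = 0" by (simp add: algebra_simps)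
  then show ?thesis using c0(2) False by simp
qed

lemma sum_adj_reindex:
  fixes w :: "'a::{finite,ab_group_add}" and F :: "'a \<Rightarrow> complex"
  shows "(\<Sum>z\<in>UNIV. (if w - z \<in> S then 1 else 0) * F z) = (\<Sum>s\<in>S. F (w - s))"
proof -
  have "(\<Sum>z\<in>UNIV. (if w - z \<in> S then 1 else 0) * F z) = (\<Sum>z\<in>{z. w - z \<in> S}. F z)"
  proof -
    have "(\<Sum>z\<in>UNIV. (if w - z \<in> S then 1 else 0) * F z) = (\<Sum>z\<in>UNIV. if z \<in> {z. w - z \<in> S} then F z else 0)"
      by (intro sum.cong) auto
    also have "\<dots> = (\<Sum>z\<in>UNIV \<inter> {z. w - z \<in> S}. F z)" by (rule sum.inter_restrict[symmetric]) simp
    finally show ?thesis by simp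
  qed
  also have "\<dots> = (\<Sum>s\<in>S. F (w - s))"
    by (rule sum.reindex_bij_witness[of _ "\<lambda>s. w - s" "\<lambda>z. w - z"]) auto
  finally show ?thesis .
qed

lemma mat_pow_formula:
  fixes S :: "'a::{finite,ab_group_add} set"
  shows "mat_pow (cay_adj S) k w v =
    (\<Sum>\<chi>\<in>chars. cay_eigenvalue S \<chi> ^ k * \<chi> (v - w)) / of_nat (card (chars :: ('a \<Rightarrow> complex) set))"
proof (induction k arbitrary: w v)
  case 0
  have "(\<Sum>\<chi>\<in>chars. \<chi> (v - w)) = (if v - w = 0 then of_nat (card (chars :: ('a \<Rightarrow> complex) set)) else 0)"
    by (rule sum_chars)
  moreover have "(\<Sum>\<chi>\<in>chars. cay_eigenvalue S \<chi> ^ 0 * \<chi> (v - w)) = (\<Sum>\<chi>\<in>chars. \<chi> (v - w))"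
    by (simp only: power_0 mult_1_left)
  moreover have "complex_of_nat (card (chars :: ('a \<Rightarrow> complex) set)) \<noteq> 0"
    using card_chars_pos[where 'a='a] by simp
  ultimately show ?case by (cases "w = v") (simp_all only: mat_pow.simps, simp_all)
next
  case (Suc k)
  define N :: complex where "N = of_nat (card (chars :: ('a \<Rightarrow> complex) set))"
  have "mat_pow (cay_adj S) (Suc k) w v =
     (\<Sum>z\<in>UNIV. cay_adj S w z * ((\<Sum>\<chi>\<in>chars. cay_eigenvalue S \<chi> ^ k * \<chi> (v - z)) / N))"
    by (simp only: mat_pow.simps Suc.IH N_def)
  also have "\<dots> = (\<Sum>s\<in>S. (\<Sum>\<chi>\<in>chars. cay_eigenvalue S \<chi> ^ k * \<chi> (v - (w - s))) / N)"
    unfolding cay_adj_def by (rule sum_adj_reindex)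
  also have "\<dots> = (\<Sum>\<chi>\<in>chars. cay_eigenvalue S \<chi> ^ k * (\<Sum>s\<in>S. \<chi> (v - (w - s)))) / N"
  proof -
    have "(\<Sum>s\<in>S. (\<Sum>\<chi>\<in>chars. cay_eigenvalue S \<chi> ^ k * \<chi> (v - (w - s))) / N)
       = (\<Sum>s\<in>S. (\<Sum>\<chi>\<in>chars. cay_eigenvalue S \<chi> ^ k * \<chi> (v - (w - s)))) / N"
      by (rule sum_divide_distrib[symmetric])
    also have "(\<Sum>s\<in>S. (\<Sum>\<chi>\<in>chars. cay_eigenvalue S \<chi> ^ k * \<chi> (v - (w - s))))
       = (\<Sum>\<chi>\<in>chars. (\<Sum>s\<in>S. cay_eigenvalue S \<chi> ^ k * \<chi> (v - (w - s))))"
      by (rule sum.swap)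
    also have "\<dots> = (\<Sum>\<chi>\<in>chars. cay_eigenvalue S \<chi> ^ k * (\<Sum>s\<in>S. \<chi> (v - (w - s))))"
      by (simp only: sum_distrib_left)
    finally show ?thesis .
  qed
  also have "\<dots> = (\<Sum>\<chi>\<in>chars. cay_eigenvalue S \<chi> ^ Suc k * \<chi> (v - w)) / N"
  proof -
    have "(\<Sum>s\<in>S. \<chi> (v - (w - s))) = cay_eigenvalue S \<chi> * \<chi> (v - w)" if "is_character \<chi>" for \<chi>
    proof -
      have "\<chi> (v - (w - s)) = \<chi> (v - w) * \<chi> s" for s
      proof -
        have e: "v - (w - s) = (v - w) + s" by (simp add: algebra_simps)
        have "\<chi> ((v - w) + s) = \<chi> (v - w) * \<chi> s" using that unfolding is_character_def by blast
        then show ?thesis unfolding e .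
      qed
      then have "(\<Sum>s\<in>S. \<chi> (v - (w - s))) = (\<Sum>s\<in>S. \<chi> (v - w) * \<chi> s)" by simp
      also have "\<dots> = \<chi> (v - w) * cay_eigenvalue S \<chi>" unfolding cay_eigenvalue_def
        by (rule sum_distrib_left[symmetric])
      finally show ?thesis by (simp only: mult.commute)
    qed
    then have "\<And>\<chi>. \<chi> \<in> chars \<Longrightarrow> cay_eigenvalue S \<chi> ^ k * (\<Sum>s\<in>S. \<chi> (v - (w - s))) = cay_eigenvalue S \<chi> ^ Suc k * \<chi> (v - w)"
      by (simp add: mult.assoc)
    then show ?thesis by (metis (no_types, lifting) sum.cong)
  qed
  finally show ?case unfolding N_def .
qed

lemma exp_sums_c: "(\<lambda>n. (z::complex) ^ n / of_nat (fact n)) sums exp z"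
proof -
  have "(\<lambda>n. z ^ n /\<^sub>R fact n) = (\<lambda>n. z ^ n / of_nat (fact n))"
    by (auto simp: fun_eq_iff scaleR_conv_of_real divide_inverse mult.commute)
  then show ?thesis using exp_converges[of z] by simp
qed

lemma term_eq_aux: "((a::complex) * b) ^ k / f * (c / N) = a ^ k / f * (b ^ k * c / N)"
  by (simp add: power_mult_distrib)

lemma transition_formula:
  fixes S :: "'a::{finite,ab_group_add} set"
  shows "transition (cay_adj S) t w v =
    (\<Sum>\<chi>\<in>chars. exp (\<i> * of_real t * cay_eigenvalue S \<chi>) * (\<chi> (v - w) / of_nat (card (chars :: ('a \<Rightarrow> complex) set))))"
proof -
  define N :: complex where "N = of_nat (card (chars :: ('a \<Rightarrow> complex) set))"
  have s1: "(\<lambda>k. (\<Sum>\<chi>\<in>chars. (\<i> * of_real t * cay_eigenvalue S \<chi>) ^ k / of_nat (fact k) * (\<chi> (v - w) / N)))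
     sums (\<Sum>\<chi>\<in>chars. exp (\<i> * of_real t * cay_eigenvalue S \<chi>) * (\<chi> (v - w) / N))"
    by (rule sums_sum, rule sums_mult2, rule exp_sums_c)
  have e1: "(\<lambda>k. (\<Sum>\<chi>\<in>chars. (\<i> * of_real t * cay_eigenvalue S \<chi>) ^ k / of_nat (fact k) * (\<chi> (v - w) / N)))
    = (\<lambda>k. (\<i> * of_real t) ^ k / of_nat (fact k) * mat_pow (cay_adj S) k w v)"
  proof (rule ext)
    fix k
    have mp: "mat_pow (cay_adj S) k w v = (\<Sum>\<chi>\<in>chars. cay_eigenvalue S \<chi> ^ k * \<chi> (v - w)) / N"
      unfolding N_def by (rule mat_pow_formula)
    have "(\<i> * of_real t) ^ k / of_nat (fact k) * mat_pow (cay_adj S) k w v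
      = (\<i> * of_real t) ^ k / of_nat (fact k) * ((\<Sum>\<chi>\<in>chars. cay_eigenvalue S \<chi> ^ k * \<chi> (v - w)) / N)"
      by (simp only: mp)
    also have "\<dots> = (\<Sum>\<chi>\<in>chars. (\<i> * of_real t) ^ k / of_nat (fact k) * (cay_eigenvalue S \<chi> ^ k * \<chi> (v - w) / N))"
      by (simp only: sum_distrib_left sum_divide_distrib)
    also have "\<dots> = (\<Sum>\<chi>\<in>chars. (\<i> * of_real t * cay_eigenvalue S \<chi>) ^ k / of_nat (fact k) * (\<chi> (v - w) / N))"
      by (simp only: term_eq_aux)
    finally show "(\<Sum>\<chi>\<in>chars. (\<i> * of_real t * cay_eigenvalue S \<chi>) ^ k / of_nat (fact k) * (\<chi> (v - w) / N))
      = (\<i> * of_real t) ^ k / of_nat (fact k) * mat_pow (cay_adj S) k w v" ..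
  qed
  have "(\<lambda>k. (\<i> * of_real t) ^ k / of_nat (fact k) * mat_pow (cay_adj S) k w v)
    sums (\<Sum>\<chi>\<in>chars. exp (\<i> * of_real t * cay_eigenvalue S \<chi>) * (\<chi> (v - w) / N))"
    using s1 unfolding e1 .
  then show ?thesis unfolding transition_def N_def by (rule sums_unique[symmetric])
qed


lemma exp_it: "exp (\<i> * complex_of_real t) = complex_of_real (cos t) + \<i> * complex_of_real (sin t)"
  by (simp add: cis_conv_exp[symmetric] complex_eq_iff)

lemma exp_mit: "exp (- \<i> * complex_of_real t) = complex_of_real (cos t) - \<i> * complex_of_real (sin t)"
  using exp_it[of "-t"] by simp

lemma exp_2pi_int: "exp (\<i> * complex_of_real (2 * pi * real_of_int m)) = 1"
proof -
  have "cis (2 * pi * real_of_int m) = 1" unfolding complex_eq_iff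
    by (simp only: cis.sel cos_int_2pin sin_int_2pin one_complex.sel)
  then show ?thesis unfolding cis_conv_exp .
qed

lemma fourier_indicator:
  fixes S1 :: "'h::{finite,ab_group_add} set"
  shows "fourier (indicator_int S1) \<psi> = (\<Sum>x\<in>S1. cnj (\<psi> x))"
proof -
  have "fourier (indicator_int S1) \<psi> = (\<Sum>x\<in>UNIV. if x \<in> S1 then cnj (\<psi> x) else 0)"
    unfolding fourier_def indicator_int_def by (intro sum.cong) auto
  also have "\<dots> = (\<Sum>x\<in>UNIV \<inter> S1. cnj (\<psi> x))" by (rule sum.inter_restrict[symmetric]) simp
  finally show ?thesis by simp
qed

lemma eigen_decomp:
  fixes S1 :: "'h::{finite,ab_group_add} set" and \<chi> :: "2 \<times> 'h \<Rightarrow> complex"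
  assumes "0 \<notin> S1" "is_character \<chi>"
  shows "cay_eigenvalue (({1::2} \<times> S1) \<union> ({0::2} \<times> S1) \<union> {(1::2, 0::'h)}) \<chi>
     = \<chi> (1, 0) + (\<chi> (1, 0) + 1) * (\<Sum>s\<in>S1. \<chi> (0, s))"
proof -
  have d1: "({1::2} \<times> S1) \<inter> ({0::2} \<times> S1) = {}" by auto
  have d2: "(({1::2} \<times> S1) \<union> ({0::2} \<times> S1)) \<inter> {(1::2, 0::'h)} = {}" using assms(1) by auto
  have s1: "sum \<chi> ({1::2} \<times> S1) = (\<Sum>s\<in>S1. \<chi> (1, s))"
    using sum.cartesian_product[of "\<lambda>a b. \<chi> (a, b)" S1 "{1::2}"] by simp
  have s0: "sum \<chi> ({0::2} \<times> S1) = (\<Sum>s\<in>S1. \<chi> (0, s))"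
    using sum.cartesian_product[of "\<lambda>a b. \<chi> (a, b)" S1 "{0::2}"] by simp
  have c1: "\<chi> (1, s) = \<chi> (1, 0) * \<chi> (0, s)" for s
  proof -
    have e: "(1::2, s) = (1, 0) + (0, s)" by simp
    have "\<chi> ((1, 0) + (0, s)) = \<chi> (1, 0) * \<chi> (0, s)" using assms(2) unfolding is_character_def by blast
    then show ?thesis unfolding e .
  qed
  have "(\<Sum>s\<in>S1. \<chi> (1, s)) = (\<Sum>s\<in>S1. \<chi> (1, 0) * \<chi> (0, s))"
    by (rule sum.cong[OF refl c1])
  then have s1': "(\<Sum>s\<in>S1. \<chi> (1, s)) = \<chi> (1, 0) * (\<Sum>s\<in>S1. \<chi> (0, s))"
    by (simp only: sum_distrib_left)
  have "sum \<chi> (({1::2} \<times> S1) \<union> ({0::2} \<times> S1) \<union> {(1::2, 0::'h)})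
      = sum \<chi> (({1::2} \<times> S1) \<union> ({0::2} \<times> S1)) + sum \<chi> {(1::2, 0::'h)}"
    by (rule sum.union_disjoint) (use d2 in auto)
  also have "sum \<chi> (({1::2} \<times> S1) \<union> ({0::2} \<times> S1)) = sum \<chi> ({1::2} \<times> S1) + sum \<chi> ({0::2} \<times> S1)"
    by (rule sum.union_disjoint) (use d1 in auto)
  finally have "cay_eigenvalue (({1::2} \<times> S1) \<union> ({0::2} \<times> S1) \<union> {(1::2, 0::'h)}) \<chi>
      = \<chi> (1, 0) * (\<Sum>s\<in>S1. \<chi> (0, s)) + (\<Sum>s\<in>S1. \<chi> (0, s)) + \<chi> (1, 0)"
    unfolding cay_eigenvalue_def s1 s0 s1' by simp
  then show ?thesis by (simp add: algebra_simps)
qed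

lemma char_10:
  fixes \<chi> :: "2 \<times> 'h::ab_group_add \<Rightarrow> complex"
  assumes "is_character \<chi>"
  shows "\<chi> (1, 0) = 1 \<or> \<chi> (1, 0) = -1"
proof -
  have "(1::2, 0::'h) + (1, 0) = 0" by (simp add: zero_prod_def)
  then have "\<chi> (1, 0) * \<chi> (1, 0) = 1" using assms unfolding is_character_def by metis
  then show ?thesis by (simp add: square_eq_1_iff)
qed

lemma restrict_char:
  fixes \<chi> :: "2 \<times> 'h::ab_group_add \<Rightarrow> complex"
  assumes "is_character \<chi>"
  shows "is_character (\<lambda>h. \<chi> (0, h))"
proof -
  have "(0::2, 0::'h) = 0" by (simp add: zero_prod_def)
  moreover have "(0::2, x + y) = (0, x) + (0, y)" for x y :: 'h by simp
  ultimately show ?thesis using assms unfolding is_character_def by metis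
qed

theorem theorem3p6:
  fixes S1 :: "'h::{finite,ab_group_add} set" and p r :: nat
  assumes "0 \<notin> S1"
    and "\<forall>l \<in> units_mod (group_exponent TYPE('h)). (nsmul l) ` S1 = S1"
    and "prime p" and "p dvd card S1"
    and "plateaued (indicator_int S1) p r" and "r \<ge> 1"
  defines "S \<equiv> ({1::2} \<times> S1) \<union> ({0::2} \<times> S1) \<union> {(1::2, 0::'h)}"
    and "r0 \<equiv> min r (multiplicity p (card S1))"
  shows "(\<forall>x::2. \<forall>y::'h.
           frac_revival (cay_adj S) (x + 1, y) (x, y) (pi / real (p ^ r0)) \<and>
           frac_revival_with (cay_adj S) (x + 1, y) (x, y) (pi / real (p ^ r0))
             (complex_of_real (cos (pi / real (p ^ r0))))
             (\<i> * complex_of_real (sin (pi / real (p ^ r0)))))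
       \<and> (\<forall>\<chi> :: 2 \<times> 'h \<Rightarrow> complex. is_character \<chi> \<longrightarrow>
           exp (\<i> * of_real (pi / real (p ^ r0)) * cay_eigenvalue S \<chi>) =
             (if \<chi> (1, 0) = 1 then exp (\<i> * of_real (pi / real (p ^ r0)))
              else exp (- \<i> * of_real (pi / real (p ^ r0)))))"

proof -
  define t where "t = pi / real (p ^ r0)"
  define q where "q = p ^ r0"
  define f where "f = indicator_int S1"
  define d where "d = card S1"
  have S_eq: "S = ({1::2} \<times> S1) \<union> ({0::2} \<times> S1) \<union> {(1::2, 0::'h)}" by (simp add: S_def)
  have pl: "fourier_cong_const f (p ^ r)" "\<not> fourier_cong_const f (p ^ Suc r)"
    using assms(5) unfolding plateaued_def f_def by auto
  have "S1 \<noteq> {}"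
  proof
    assume e: "S1 = {}"
    have "fourier f \<chi> = 0" for \<chi> :: "'h \<Rightarrow> complex" unfolding f_def fourier_indicator e by simp
    then have "fourier_cong_const f (p ^ Suc r)" unfolding fourier_cong_const_def
      by (intro exI[of _ 0]) (auto intro!: exI[of _ 0])
    then show False using pl(2) by blast
  qed
  then have d0: "d \<noteq> 0" unfolding d_def by (simp add: card_eq_0_iff)
  have pe: "prime_elem p" using assms(3) by (rule prime_imp_prime_elem)
  have "0 < multiplicity p d" using prime_multiplicity_gt_zero_iff[OF pe d0] assms(4) d_def by simp
  then have r01: "r0 \<ge> 1" using assms(6) unfolding r0_def d_def by simp
  have p2: "p \<ge> 2" using assms(3) by (simp add: prime_ge_2_nat)
  have q2: "q \<ge> 2"
  proof -
    have "p ^ 1 \<le> p ^ r0" using r01 p2 by (intro power_increasing) auto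
    then show ?thesis using p2 unfolding q_def by simp
  qed
  have qd: "q dvd d" unfolding q_def d_def r0_def by (rule multiplicity_dvd') simp
  have qr: "q dvd p ^ r" unfolding q_def r0_def by (rule le_imp_power_dvd) simp
  have tq: "t * real q = pi" unfolding t_def q_def using q2 q_def p2 by simp
  have tq': "t = pi / real q" unfolding t_def q_def by simp
  have rq: "real q \<ge> 2" using q2 by simp
  have t0: "0 < t" "t < pi" unfolding tq' using rq pi_gt_zero by (simp_all add: divide_less_eq)
  obtain k :: int where hk: "\<And>\<chi>::'h \<Rightarrow> complex. is_character \<chi> \<Longrightarrow>
      \<exists>j::int. fourier f \<chi> = of_int k + of_nat (p ^ r) * of_int j"
    using pl(1) unfolding fourier_cong_const_def by blast
  obtain j0 :: int where j0: "fourier f (\<lambda>_. 1) = of_int k + of_nat (p ^ r) * of_int j0"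
    using hk[OF triv_char] by blast
  have fd: "fourier f (\<lambda>_. 1) = of_nat d" unfolding f_def fourier_indicator d_def by simp
  have sigma: "\<exists>n::int. (\<Sum>s\<in>S1. \<psi> s) = of_int (int q * n)" if psi: "is_character \<psi>" for \<psi> :: "'h \<Rightarrow> complex"
  proof -
    obtain j :: int where j: "fourier f \<psi> = of_int k + of_nat (p ^ r) * of_int j" using hk[OF psi] by blast
    have "(\<Sum>s\<in>S1. \<psi> s) = cnj (fourier f \<psi>)" unfolding f_def fourier_indicator by (simp add: cnj_sum)
    also have "\<dots> = of_int k + of_nat (p ^ r) * of_int j" unfolding j by simp
    also have "\<dots> = of_nat d + of_nat (p ^ r) * (of_int j - of_int j0)" using j0 fd by (simp add: algebra_simps)
    also have "\<dots> = of_int (int d + int (p ^ r) * (j - j0))" by simp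
    finally have e: "(\<Sum>s\<in>S1. \<psi> s) = of_int (int d + int (p ^ r) * (j - j0))" .
    have "int q dvd int d" using qd by (simp only: int_dvd_int_iff)
    moreover have "int q dvd int (p ^ r)" using qr by (simp only: int_dvd_int_iff)
    ultimately have "int q dvd int d + int (p ^ r) * (j - j0)"
      by (intro dvd_add dvd_mult2)
    then obtain n where "int d + int (p ^ r) * (j - j0) = int q * n" by (elim dvdE)
    then show ?thesis using e by auto
  qed
  have eig: "exp (\<i> * of_real t * cay_eigenvalue S \<chi>) =
      (if \<chi> (1, 0) = 1 then exp (\<i> * of_real t) else exp (- \<i> * of_real t))"
    if chi: "is_character \<chi>" for \<chi> :: "2 \<times> 'h \<Rightarrow> complex"
  proof -
    have lam: "cay_eigenvalue S \<chi> = \<chi> (1, 0) + (\<chi> (1, 0) + 1) * (\<Sum>s\<in>S1. \<chi> (0, s))"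
      unfolding S_eq by (rule eigen_decomp[OF assms(1) chi])
    obtain n where n: "(\<Sum>s\<in>S1. \<chi> (0, s)) = of_int (int q * n)"
      using sigma[OF restrict_char[OF chi]] by blast
    show ?thesis
    proof (cases "\<chi> (1, 0) = 1")
      case True
      have r: "t * (1 + 2 * real_of_int (int q * n)) = t + 2 * pi * real_of_int n"
        using tq by (simp add: algebra_simps)
      have "\<i> * of_real t * cay_eigenvalue S \<chi> = \<i> * of_real (t * (1 + 2 * real_of_int (int q * n)))"
        unfolding lam n True by simp
      also have "\<dots> = \<i> * of_real t + \<i> * of_real (2 * pi * real_of_int n)"
        unfolding r by (simp add: algebra_simps)
      finally have "exp (\<i> * of_real t * cay_eigenvalue S \<chi>) = exp (\<i> * of_real t) * exp (\<i> * of_real (2 * pi * real_of_int n))"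
        by (simp add: exp_add)
      then show ?thesis using True exp_2pi_int by simp
    next
      case False
      then have m: "\<chi> (1, 0) = -1" using char_10[OF chi] by blast
      have "cay_eigenvalue S \<chi> = -1" unfolding lam m by simp
      then show ?thesis using False by simp
    qed
  qed
  define N :: complex where "N = of_nat (card (chars :: (2 \<times> 'h \<Rightarrow> complex) set))"
  have N0: "N \<noteq> 0" unfolding N_def using card_chars_pos[where 'a="2 \<times> 'h"] by simp
  have trans: "transition (cay_adj S) t w u =
      of_real (cos t) * (if w = u then 1 else 0) + \<i> * of_real (sin t) * (if w = (1, 0) + u then 1 else 0)"
    for w u :: "2 \<times> 'h"
  proof -
    have tm: "exp (\<i> * of_real t * cay_eigenvalue S \<chi>) * (\<chi> (u - w) / N)
       = of_real (cos t) * \<chi> (u - w) / N + \<i> * of_real (sin t) * \<chi> ((1, 0) + (u - w)) / N"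
      if chi: "\<chi> \<in> chars" for \<chi>
    proof -
      have c: "is_character \<chi>" using chi by simp
      have pr: "\<chi> ((1, 0) + (u - w)) = \<chi> (1, 0) * \<chi> (u - w)" using c unfolding is_character_def by blast
      show ?thesis
      proof (cases "\<chi> (1, 0) = 1")
        case True
        then show ?thesis unfolding eig[OF c] pr exp_it by (simp add: algebra_simps add_divide_distrib)
      next
        case False
        then have m: "\<chi> (1, 0) = -1" using char_10[OF c] by blast
        show ?thesis unfolding eig[OF c] pr exp_mit m using False m by (simp add: algebra_simps add_divide_distrib diff_divide_distrib)
      qed
    qed
    have "transition (cay_adj S) t w u = (\<Sum>\<chi>\<in>chars. exp (\<i> * of_real t * cay_eigenvalue S \<chi>) * (\<chi> (u - w) / N))"
      unfolding N_def by (rule transition_formula)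
    also have "\<dots> = (\<Sum>\<chi>\<in>chars. of_real (cos t) * \<chi> (u - w) / N + \<i> * of_real (sin t) * \<chi> ((1, 0) + (u - w)) / N)"
      by (rule sum.cong[OF refl tm])
    also have "\<dots> = of_real (cos t) * (\<Sum>\<chi>\<in>chars. \<chi> (u - w)) / N + \<i> * of_real (sin t) * (\<Sum>\<chi>\<in>chars. \<chi> ((1, 0) + (u - w))) / N"
      by (simp only: sum.distrib sum_divide_distrib[symmetric] sum_distrib_left[symmetric] times_divide_eq_right)
    also have "\<dots> = of_real (cos t) * (if w = u then 1 else 0) + \<i> * of_real (sin t) * (if w = (1, 0) + u then 1 else 0)"
    proof -
      have e1: "(u - w = 0) = (w = u)" by auto
      have e2: "((1, 0) + (u - w) = 0) = (w = (1, 0) + u)" by (auto simp: algebra_simps)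
      show ?thesis unfolding sum_chars N_def[symmetric] e1 e2 using N0 by simp
    qed
    finally show ?thesis .
  qed
  have part1: "frac_revival_with (cay_adj S) (x + 1, y) (x, y) t
      (complex_of_real (cos t)) (\<i> * complex_of_real (sin t))" for x :: 2 and y :: 'h
  proof -
    have "sin t > 0" using t0 by (intro sin_gt_zero)
    then have b0: "\<i> * complex_of_real (sin t) \<noteq> 0" by simp
    have nn: "(cmod (complex_of_real (cos t)))\<^sup>2 + (cmod (\<i> * complex_of_real (sin t)))\<^sup>2 = 1"
      by (simp add: norm_mult)
    have v: "(1::2, 0::'h) + (x + 1, y) = (x, y)"
    proof -
      have "(1::2) + (x + 1) = x" by (simp add: algebra_simps)
      then show ?thesis by simp
    qed
    show ?thesis unfolding frac_revival_with_def using b0 nn trans v by simp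
  qed
  show ?thesis
  proof (intro conjI allI impI)
    fix x :: 2 and y :: 'h
    show "frac_revival_with (cay_adj S) (x + 1, y) (x, y) (pi / real (p ^ r0))
        (complex_of_real (cos (pi / real (p ^ r0)))) (\<i> * complex_of_real (sin (pi / real (p ^ r0))))"
      using part1[of x y] unfolding t_def .
    then show "frac_revival (cay_adj S) (x + 1, y) (x, y) (pi / real (p ^ r0))"
      unfolding frac_revival_def by blast
  next
    fix \<chi> :: "2 \<times> 'h \<Rightarrow> complex"
    assume "is_character \<chi>"
    then show "exp (\<i> * of_real (pi / real (p ^ r0)) * cay_eigenvalue S \<chi>) =
             (if \<chi> (1, 0) = 1 then exp (\<i> * of_real (pi / real (p ^ r0)))
              else exp (- \<i> * of_real (pi / real (p ^ r0))))"
      using eig unfolding t_def by blast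
  qed
qed

end
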